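(* Let $\epsilon>0$, let $\mathbb G$ be the (augmented) natural filtration of $W$ and $\mathbb F=(\mathcal F_t)_{t\ge0}$ with $\mathcal F_t=\mathcal G_{t-\epsilon}$ (where $\mathcal G_s:=\mathcal G_0$ for $s<0$). Then there is no probability measure $Q\sim P$ under which the optional projection ${}^oM$ of $M$ into $\mathbb F$ is a $(Q,\mathbb F)$-local martingale, i.e. $\mathcal M_{loc}({}^oM,\mathbb F)=\emptyset$.
   Context: $B^1,B^2,B^3$ are independent standard Brownian motions on $(\Omega,\mathcal F,P)$ with $(B^1_0,B^2_0,B^3_0)=(1,0,0)$, $M_t:=((B^1_t)^2+(B^2_t)^2+(B^3_t)^2)^{-1/2}$, and $W_t:=\int_0^tM_s(B^1_sdB^1_s+B^2_sdB^2_s+B^3_sdB^3_s)$, a one-dimensional Brownian motion; $dM_t=-M_t^2dW_t$. ${}^oM_t=\mathbb E^P[M_t\mid\mathcal F_t]$ (càdlàg version). For a process $Y$ and filtration $\mathbb H$, $\mathcal M_{loc}(Y,\mathbb H)$ is the set of probability measures $Q\sim P$ (on $(\Omega,\mathcal G_\infty)$) such that $Y$ is a $(Q,\mathbb H)$-local martingale. *)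

theory Defs
  imports "HOL-Probability.Probability"
begin

definition brownian_motion :: "'a measure \<Rightarrow> (real \<Rightarrow> 'a \<Rightarrow> real) \<Rightarrow> real \<Rightarrow> bool" where
  "brownian_motion P X x \<longleftrightarrow>
     (\<forall>t\<ge>0. X t \<in> borel_measurable P) \<and>
     (AE \<omega> in P. X 0 \<omega> = x) \<and>
     (AE \<omega> in P. continuous_on {0..} (\<lambda>t. X t \<omega>)) \<and>
     (\<forall>s t. 0 \<le> s \<and> s < t \<longrightarrow>
        distributed P lborel (\<lambda>\<omega>. X t \<omega> - X s \<omega>) (\<lambda>y. ennreal (normal_density 0 (sqrt (t - s)) y))) \<and>
     (\<forall>(n::nat) (\<tau>::nat \<Rightarrow> real). 0 \<le> \<tau> 0 \<and> strict_mono \<tau> \<longrightarrow>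
        prob_space.indep_vars P (\<lambda>_. borel) (\<lambda>i \<omega>. X (\<tau> (Suc i)) \<omega> - X (\<tau> i) \<omega>) {..<n})"

definition aug_nat_filtration :: "'a measure \<Rightarrow> (real \<Rightarrow> 'a \<Rightarrow> real) \<Rightarrow> real \<Rightarrow> 'a measure" where
  "aug_nat_filtration P Y t = sigma (space P)
     ({Y s -` A \<inter> space P | s A. 0 \<le> s \<and> s \<le> max t 0 \<and> A \<in> sets borel} \<union> null_sets P)"

definition filtration_infty :: "'a measure \<Rightarrow> (real \<Rightarrow> 'a measure) \<Rightarrow> 'a measure" where
  "filtration_infty P G = sigma (space P) (\<Union>t. sets (G t))"

definition equiv_prob_on :: "'a measure \<Rightarrow> 'a measure \<Rightarrow> 'a measure \<Rightarrow> bool" where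
  "equiv_prob_on Q P H \<longleftrightarrow> prob_space Q \<and> space Q = space P \<and> sets Q = sets H \<and>
     (\<forall>A\<in>sets H. emeasure Q A = 0 \<longleftrightarrow> emeasure P A = 0)"

definition is_martingale :: "'a measure \<Rightarrow> (real \<Rightarrow> 'a measure) \<Rightarrow> (real \<Rightarrow> 'a \<Rightarrow> real) \<Rightarrow> bool" where
  "is_martingale Q F X \<longleftrightarrow>
     (\<forall>t\<ge>0. X t \<in> borel_measurable (F t) \<and> integrable Q (X t)) \<and>
     (\<forall>s t. 0 \<le> s \<and> s \<le> t \<longrightarrow>
        (\<forall>A\<in>sets (F s). (\<integral>\<omega>. indicator A \<omega> * X t \<omega> \<partial>Q) = (\<integral>\<omega>. indicator A \<omega> * X s \<omega> \<partial>Q)))"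

definition is_local_martingale :: "'a measure \<Rightarrow> (real \<Rightarrow> 'a measure) \<Rightarrow> (real \<Rightarrow> 'a \<Rightarrow> real) \<Rightarrow> bool" where
  "is_local_martingale Q F X \<longleftrightarrow>
     (\<exists>\<tau> :: nat \<Rightarrow> 'a \<Rightarrow> real.
        (\<forall>n. stopping_time F (\<tau> n) \<and> (\<forall>\<omega>\<in>space Q. 0 \<le> \<tau> n \<omega>)) \<and>
        (AE \<omega> in Q. mono (\<lambda>n. \<tau> n \<omega>) \<and> filterlim (\<lambda>n. \<tau> n \<omega>) at_top sequentially) \<and>
        (\<forall>n. is_martingale Q F (\<lambda>t \<omega>. X (min t (\<tau> n \<omega>)) \<omega>)))"

definition cadlag :: "(real \<Rightarrow> real) \<Rightarrow> bool" where
  "cadlag f \<longleftrightarrow> (\<forall>t\<ge>0. continuous (at_right t) f) \<and> (\<forall>t>0. \<exists>l. (f \<longlongrightarrow> l) (at_left t))"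

definition optional_projection :: "'a measure \<Rightarrow> (real \<Rightarrow> 'a measure) \<Rightarrow> (real \<Rightarrow> 'a \<Rightarrow> real) \<Rightarrow> (real \<Rightarrow> 'a \<Rightarrow> real) \<Rightarrow> bool" where
  "optional_projection P F X Y \<longleftrightarrow>
     (\<forall>t\<ge>0. Y t \<in> borel_measurable (F t)) \<and>
     (AE \<omega> in P. cadlag (\<lambda>t. Y t \<omega>)) \<and>
     (\<forall>t\<ge>0. AE \<omega> in P. Y t \<omega> = real_cond_exp P (F t) (X t) \<omega>)"

end

theory Submission
  imports Defs
begin

lemma triv_cond_exp:
  assumes P: "prob_space P" and sub: "subalgebra P F"
    and triv: "\<And>A. A \<in> sets F \<Longrightarrow> A \<in> null_sets P \<or> space P - A \<in> null_sets P"
    and intf: "integrable P f"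
  shows "AE x in P. real_cond_exp P F f x = integral\<^sup>L P f"
proof -
  interpret prob_space P by fact
  interpret finite_measure_subalgebra P F
    by unfold_locales (rule sub)
  show ?thesis
  proof (rule real_cond_exp_charact)
    fix A assume A: "A \<in> sets F"
    then have AP: "A \<in> sets P" using sub unfolding subalgebra_def by auto
    from triv[OF A] show "(\<integral>x\<in>A. f x \<partial>P) = (\<integral>x\<in>A. integral\<^sup>L P f \<partial>P)"
    proof
      assume N: "A \<in> null_sets P"
      have "(\<integral>x\<in>A. f x \<partial>P) = 0" unfolding set_lebesgue_integral_def
        by (rule integral_eq_zero_AE) (use AE_not_in[OF N] in auto)
      moreover have "(\<integral>x\<in>A. integral\<^sup>L P f \<partial>P) = 0" unfolding set_lebesgue_integral_def
        by (rule integral_eq_zero_AE) (use AE_not_in[OF N] in auto)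
      ultimately show ?thesis by simp
    next
      assume N: "space P - A \<in> null_sets P"
      have ae0: "AE x in P. x \<in> A" using AE_not_in[OF N] by auto
      have ae: "AE x in P. indicator A x = (1::real)" using ae0 by eventually_elim auto
      have "(\<integral>x\<in>A. f x \<partial>P) = (\<integral>x. f x \<partial>P)" unfolding set_lebesgue_integral_def
        by (rule integral_cong_AE) (use ae AP intf in auto)
      moreover have "(\<integral>x\<in>A. integral\<^sup>L P f \<partial>P) = (\<integral>x. integral\<^sup>L P f \<partial>P)" unfolding set_lebesgue_integral_def
        by (rule integral_cong_AE) (use ae AP in auto)
      ultimately show ?thesis by (simp add: prob_space)
    qed
  qed (use intf in auto)
qed

lemma triv_sets:
  assumes W0: "\<And>\<omega>. W 0 \<omega> = (0::real)"
  shows "sets (aug_nat_filtration P W 0) \<subseteq> {A \<in> sets P. A \<in> null_sets P \<or> space P - A \<in> null_sets P}"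
    and "null_sets P \<subseteq> sets (aug_nat_filtration P W 0)"
    and "space (aug_nat_filtration P W 0) = space P"
proof -
  let ?Gen = "{W s -` A \<inter> space P | s A. 0 \<le> s \<and> s \<le> max 0 0 \<and> A \<in> sets borel} \<union> null_sets P"
  have genpow: "?Gen \<subseteq> Pow (space P)" using null_sets.sets_into_space by auto
  have S: "sets (aug_nat_filtration P W 0) = sigma_sets (space P) ?Gen"
    unfolding aug_nat_filtration_def using genpow by (simp add: sets_measure_of)
  show "space (aug_nat_filtration P W 0) = space P"
    unfolding aug_nat_filtration_def using genpow by (simp add: space_measure_of_conv)
  show "null_sets P \<subseteq> sets (aug_nat_filtration P W 0)" unfolding S by auto
  show "sets (aug_nat_filtration P W 0) \<subseteq> {A \<in> sets P. A \<in> null_sets P \<or> space P - A \<in> null_sets P}"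
    unfolding S
  proof
    fix X assume "X \<in> sigma_sets (space P) ?Gen"
    then show "X \<in> {A \<in> sets P. A \<in> null_sets P \<or> space P - A \<in> null_sets P}"
    proof induct
      case (Basic a)
      then show ?case
      proof
        assume "a \<in> {W s -` A \<inter> space P | s A. 0 \<le> s \<and> s \<le> max 0 0 \<and> A \<in> sets borel}"
        then obtain A where "a = W 0 -` A \<inter> space P" by auto
        then have "a = {} \<or> a = space P" using W0 by (cases "0 \<in> A") auto
        then show ?case by auto
      qed auto
    next
      case Empty then show ?case by auto
    next
      case (Compl a)
      have "space P - (space P - a) = a" using Compl sets.sets_into_space by auto
      then show ?case using Compl by auto
    next
      case (Union a)
      show ?case
      proof (cases "\<exists>i. space P - a i \<in> null_sets P")
        case True
        then obtain i where i: "space P - a i \<in> null_sets P" by auto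
        have "space P - (\<Union>i. a i) \<in> null_sets P"
          by (rule null_sets_subset[OF i]) (use Union in auto)
        then show ?thesis using Union by auto
      next
        case False
        then have "\<And>i. a i \<in> null_sets P" using Union by auto
        then show ?thesis by auto
      qed
    qed
  qed
qed

lemma gauss_half:
  "(\<integral>\<^sup>+x. ennreal (exp (- x\<^sup>2)) * indicator {0..} x \<partial>lborel) = ennreal (sqrt pi / 2)"
proof -
  have hb: "has_bochner_integral lborel (\<lambda>x. indicator {0..} x *\<^sub>R exp (- x\<^sup>2)) (sqrt pi / 2)"
    by (rule gaussian_moment_0)
  have "(\<integral>\<^sup>+x. ennreal (indicator {0..} x *\<^sub>R exp (- x\<^sup>2)) \<partial>lborel)
        = ennreal (\<integral>x. indicator {0..} x *\<^sub>R exp (- x\<^sup>2) \<partial>lborel)"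
    by (rule nn_integral_eq_integral[OF integrable.intros[OF hb]]) auto
  also have "(\<integral>x. indicator {0..} x *\<^sub>R exp (- x\<^sup>2) \<partial>lborel) = sqrt pi / 2"
    using hb by (rule has_bochner_integral_integral_eq)
  finally show ?thesis
    by (simp add: indicator_mult_ennreal mult.commute)
qed

lemma gauss_scaled:
  fixes r :: real assumes r: "r > 0"
  shows "(\<integral>\<^sup>+s. ennreal (exp (- (s * r)\<^sup>2)) * indicator {0..} s \<partial>lborel) = ennreal (sqrt pi / 2 / r)"
proof -
  let ?f = "\<lambda>u::real. ennreal (exp (- u\<^sup>2)) * indicator {0..} u"
  have "(\<integral>\<^sup>+x. ?f x \<partial>lborel) = \<bar>r\<bar> * (\<integral>\<^sup>+x. ?f (0 + r * x) \<partial>lborel)"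
    by (rule nn_integral_real_affine) (use r in auto)
  also have "(\<lambda>x. ?f (0 + r * x)) = (\<lambda>s. ennreal (exp (- (s * r)\<^sup>2)) * indicator {0..} s)"
    using r by (auto simp: fun_eq_iff indicator_def zero_le_mult_iff mult.commute)
  finally have eq: "ennreal (sqrt pi / 2) = ennreal r * (\<integral>\<^sup>+s. ennreal (exp (- (s * r)\<^sup>2)) * indicator {0..} s \<partial>lborel)"
    using r gauss_half by simp
  have "(\<integral>\<^sup>+s. ennreal (exp (- (s * r)\<^sup>2)) * indicator {0..} s \<partial>lborel)
      = ennreal (1 / r) * (ennreal r * (\<integral>\<^sup>+s. ennreal (exp (- (s * r)\<^sup>2)) * indicator {0..} s \<partial>lborel))"
    using r by (simp add: ennreal_mult'[symmetric] mult.assoc[symmetric])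
  also have "\<dots> = ennreal (sqrt pi / 2 / r)"
    unfolding eq[symmetric] using r by (simp add: ennreal_mult'[symmetric])
  finally show ?thesis .
qed

definition Phi0 :: "real \<Rightarrow> real" where
  "Phi0 x = integral {-1..x} (\<lambda>u. exp (- u\<^sup>2))"

lemma Phi0_deriv:
  assumes "x > -1"
  shows "(Phi0 has_real_derivative exp (- x\<^sup>2)) (at x)"
proof -
  have c: "continuous_on {-1..x+1} (\<lambda>u::real. exp (- u\<^sup>2))"
    by (intro continuous_intros)
  have "((\<lambda>y. integral {-1..y} (\<lambda>u. exp (- u\<^sup>2))) has_real_derivative exp (- x\<^sup>2)) (at x within {-1..x+1})"
    by (rule integral_has_real_derivative[OF c]) (use assms in auto)
  moreover have "at x within {-1..x+1} = at x"
    by (rule at_within_interior) (use assms in auto)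
  ultimately show ?thesis unfolding Phi0_def[abs_def] by simp
qed

lemma Phi0_strict_mono:
  assumes "-1 < x" "x < y"
  shows "Phi0 x < Phi0 y"
  using assms by (intro DERIV_pos_imp_increasing[of x y Phi0]) (auto intro!: exI Phi0_deriv)

lemma Phi0_FTC:
  assumes "0 \<le> b"
  shows "(\<integral>\<^sup>+x. ennreal (exp (- x\<^sup>2)) * indicator {0..b} x \<partial>lborel) = ennreal (Phi0 b - Phi0 0)"
  by (rule nn_integral_FTC_Icc) (use assms in \<open>auto intro!: Phi0_deriv\<close>)

lemma Phi0_bound:
  assumes "0 \<le> a"
  shows "Phi0 a - Phi0 0 < sqrt pi / 2"
proof -
  have "ennreal (Phi0 (a+1) - Phi0 0) = (\<integral>\<^sup>+x. ennreal (exp (- x\<^sup>2)) * indicator {0..a+1} x \<partial>lborel)"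
    using assms by (simp add: Phi0_FTC)
  also have "\<dots> \<le> (\<integral>\<^sup>+x. ennreal (exp (- x\<^sup>2)) * indicator {0..} x \<partial>lborel)"
    by (intro nn_integral_mono) (auto simp: indicator_def)
  also have "\<dots> = ennreal (sqrt pi / 2)" by (rule gauss_half)
  finally have "Phi0 (a+1) - Phi0 0 \<le> sqrt pi / 2"
    using pi_gt_zero by (auto simp add: ennreal_le_iff2)
  moreover have "Phi0 a < Phi0 (a+1)" using assms by (intro Phi0_strict_mono) auto
  ultimately show ?thesis by linarith
qed

lemma gauss_prod_pt:
  fixes t a x z :: real
  assumes t: "t > 0" and a: "a \<ge> 0"
  defines "D \<equiv> 1 + 2 * a * t"
  shows "normal_density 0 (sqrt t) z * exp (- (a * (x + z)\<^sup>2))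
       = exp (- (a * x\<^sup>2) / D) / sqrt D * normal_density (- (2 * a * t * x) / D) (sqrt (t / D)) z"
proof -
  have "0 \<le> 2 * a * t" using t a by simp
  then have D: "D > 0" "D \<ge> 1" by (auto simp: D_def)
  have e: "- (z - 0)\<^sup>2 / (2 * t) + - (a * (x + z)\<^sup>2)
      = - (a * x\<^sup>2) / D + - (z - (- (2 * a * t * x) / D))\<^sup>2 / (2 * (t / D))"
  proof -
    have num: "D * z\<^sup>2 + 2 * t * D * a * (x + z)\<^sup>2 = 2 * t * a * x\<^sup>2 + (z * D + 2 * a * t * x)\<^sup>2"
      by (simp add: D_def power2_eq_square algebra_simps)
    have l: "- (z - 0)\<^sup>2 / (2 * t) + - (a * (x + z)\<^sup>2) = - (D * z\<^sup>2 + 2 * t * D * a * (x + z)\<^sup>2) / (2 * t * D)"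
      using D t by (simp add: field_simps)
    have r: "- (a * x\<^sup>2) / D + - (z - (- (2 * a * t * x) / D))\<^sup>2 / (2 * (t / D))
        = - (2 * t * a * x\<^sup>2 + (z * D + 2 * a * t * x)\<^sup>2) / (2 * t * D)"
    proof -
      have "z - (- (2 * a * t * x) / D) = (z * D + 2 * a * t * x) / D" using D by (simp add: field_simps)
      then have A: "- (z - (- (2 * a * t * x) / D))\<^sup>2 / (2 * (t / D)) = - (z * D + 2 * a * t * x)\<^sup>2 / (2 * t * D)"
        using D t by (simp add: power_divide field_simps) (simp add: power2_eq_square)
      have g: "\<And>N. - (a * x\<^sup>2) / D + - N / (2 * t * D) = - (2 * t * a * x\<^sup>2 + N) / (2 * t * D)"
        using D t by (simp add: field_simps)
      show ?thesis unfolding A g ..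
    qed
    show ?thesis unfolding l r num ..
  qed
  have s: "sqrt (2 * pi * (t / D)) = sqrt (2 * pi * t) / sqrt D"
    using D t by (simp add: real_sqrt_divide[symmetric])
  have s2: "sqrt (2 * pi * t) = sqrt D * sqrt (2 * pi * t / D)"
    using D by (simp add: real_sqrt_mult[symmetric])
  have "normal_density 0 (sqrt t) z * exp (- (a * (x + z)\<^sup>2))
      = 1 / sqrt (2 * pi * t) * exp (- (z - 0)\<^sup>2 / (2 * t) + - (a * (x + z)\<^sup>2))"
    using t by (simp add: normal_density_def exp_add[symmetric])
  also have "\<dots> = 1 / sqrt (2 * pi * t) * exp (- (a * x\<^sup>2) / D + - (z - (- (2 * a * t * x) / D))\<^sup>2 / (2 * (t / D)))"
    by (simp only: e)
  also have "\<dots> = exp (- (a * x\<^sup>2) / D) / sqrt D * normal_density (- (2 * a * t * x) / D) (sqrt (t / D)) z"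
    using t D by (simp add: normal_density_def exp_add[symmetric] s) (rule s2)
  finally show ?thesis .
qed

lemma nn_integral_normal_density:
  assumes "\<sigma> > 0"
  shows "(\<integral>\<^sup>+z. ennreal (normal_density \<mu> \<sigma> z) \<partial>lborel) = 1"
proof -
  have "prob_space (density lborel (normal_density \<mu> \<sigma>))" by (rule prob_space_normal_density[OF assms])
  then have "emeasure (density lborel (normal_density \<mu> \<sigma>)) UNIV = 1"
    using prob_space.emeasure_space_1 by fastforce
  then show ?thesis by (simp add: emeasure_density)
qed

lemma gauss_1d:
  fixes t a x :: real
  assumes t: "t > 0" and a: "a \<ge> 0"
  shows "(\<integral>\<^sup>+z. ennreal (normal_density 0 (sqrt t) z) * ennreal (exp (- (a * (x + z)\<^sup>2))) \<partial>lborel)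
       = ennreal (exp (- (a * x\<^sup>2) / (1 + 2 * a * t)) / sqrt (1 + 2 * a * t))"
proof -
  let ?D = "1 + 2 * a * t"
  have "0 \<le> 2 * a * t" using t a by simp
  then have D: "?D > 0" by linarith
  have "(\<integral>\<^sup>+z. ennreal (normal_density 0 (sqrt t) z) * ennreal (exp (- (a * (x + z)\<^sup>2))) \<partial>lborel)
      = (\<integral>\<^sup>+z. ennreal (exp (- (a * x\<^sup>2) / ?D) / sqrt ?D) * ennreal (normal_density (- (2 * a * t * x) / ?D) (sqrt (t / ?D)) z) \<partial>lborel)"
    using gauss_prod_pt[OF t a] D by (intro nn_integral_cong) (simp add: ennreal_mult[symmetric])
  also have "\<dots> = ennreal (exp (- (a * x\<^sup>2) / ?D) / sqrt ?D) * (\<integral>\<^sup>+z. ennreal (normal_density (- (2 * a * t * x) / ?D) (sqrt (t / ?D)) z) \<partial>lborel)"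
    by (rule nn_integral_cmult) simp
  also have "\<dots> = ennreal (exp (- (a * x\<^sup>2) / ?D) / sqrt ?D)"
    using D t by (simp add: nn_integral_normal_density)
  finally show ?thesis .
qed

lemma g_deriv:
  fixes t x :: real assumes t: "t > 0"
  shows "((\<lambda>s. s / sqrt (1 + 2 * s\<^sup>2 * t)) has_real_derivative 1 / sqrt (1 + 2 * x\<^sup>2 * t) ^ 3) (at x)"
proof -
  define D where "D = 1 + 2 * x\<^sup>2 * t"
  have "0 \<le> 2 * x\<^sup>2 * t" using t by simp
  then have D: "D > 0" unfolding D_def by linarith
  define r where "r = sqrt D"
  have r: "r > 0" "r\<^sup>2 = D" using D unfolding r_def by auto
  have d1: "((\<lambda>s. 1 + 2 * s\<^sup>2 * t) has_real_derivative 4 * x * t) (at x)"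
    by (auto intro!: derivative_eq_intros)
  have d2: "((\<lambda>s. sqrt (1 + 2 * s\<^sup>2 * t)) has_real_derivative (inverse (sqrt D) / 2) * (4 * x * t)) (at x)"
    using DERIV_chain2[OF DERIV_real_sqrt[OF D[unfolded D_def]] d1] unfolding D_def by simp
  have d3: "((\<lambda>s. s / sqrt (1 + 2 * s\<^sup>2 * t)) has_real_derivative
      (1 * sqrt D - (inverse (sqrt D) / 2 * (4 * x * t)) * x) / (sqrt D ^ Suc (Suc 0))) (at x)"
    using DERIV_quotient[OF DERIV_ident d2] D unfolding D_def by simp
  have eq: "(1 * r - (inverse r / 2 * (4 * x * t)) * x) / (r ^ Suc (Suc 0)) = 1 / r ^ 3"
  proof -
    have "(1 * r - (inverse r / 2 * (4 * x * t)) * x) = (r\<^sup>2 - 2 * x\<^sup>2 * t) / r"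
      using r by (simp add: field_simps power2_eq_square)
    also have "\<dots> = 1 / r" using r unfolding D_def by simp
    finally show ?thesis using r by (simp add: power2_eq_square power3_eq_cube)
  qed
  show ?thesis using d3 eq unfolding r_def D_def by simp
qed

lemma g_lim:
  fixes t :: real assumes t: "t > 0"
  shows "((\<lambda>s. s / sqrt (1 + 2 * s\<^sup>2 * t)) \<longlongrightarrow> 1 / sqrt (2 * t)) at_top"
proof -
  have inv: "((\<lambda>s::real. inverse (s\<^sup>2)) \<longlongrightarrow> 0) at_top"
    by (intro tendsto_inverse_0_at_top filterlim_pow_at_top filterlim_ident) auto
  have "((\<lambda>s::real. 1 / sqrt (inverse (s\<^sup>2) + 2 * t)) \<longlongrightarrow> 1 / sqrt (0 + 2 * t)) at_top"
    using t by (intro tendsto_intros inv) auto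
  then have l: "((\<lambda>s::real. 1 / sqrt (inverse (s\<^sup>2) + 2 * t)) \<longlongrightarrow> 1 / sqrt (2 * t)) at_top" by simp
  have ev: "eventually (\<lambda>s. 1 / sqrt (inverse (s\<^sup>2) + 2 * t) = s / sqrt (1 + 2 * s\<^sup>2 * t)) at_top"
    using eventually_gt_at_top[of 0]
  proof eventually_elim
    case (elim s)
    have "inverse (s\<^sup>2) + 2 * t = (1 + 2 * s\<^sup>2 * t) / s\<^sup>2" using elim by (simp add: field_simps)
    then have "sqrt (inverse (s\<^sup>2) + 2 * t) = sqrt (1 + 2 * s\<^sup>2 * t) / s"
      using elim by (simp add: real_sqrt_divide)
    then show ?case using elim by simp
  qed
  show ?thesis using tendsto_cong[OF ev] l by simp
qed

lemma h_integral:
  fixes t :: real assumes t: "t > 0"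
  shows "(\<integral>\<^sup>+s. ennreal (exp (- (s\<^sup>2) / (1 + 2 * s\<^sup>2 * t)) / sqrt (1 + 2 * s\<^sup>2 * t) ^ 3) * indicator {0..} s \<partial>lborel)
       = ennreal (Phi0 (1 / sqrt (2 * t)) - Phi0 0)"
proof -
  let ?g = "\<lambda>s. s / sqrt (1 + 2 * s\<^sup>2 * t)"
  have "(\<integral>\<^sup>+s. ennreal (exp (- (s\<^sup>2) / (1 + 2 * s\<^sup>2 * t)) / sqrt (1 + 2 * s\<^sup>2 * t) ^ 3) * indicator {0..} s \<partial>lborel)
      = ennreal (Phi0 (1 / sqrt (2 * t)) - Phi0 (?g 0))"
  proof (rule nn_integral_FTC_atLeast)
    show "(\<lambda>s. exp (- (s\<^sup>2) / (1 + 2 * s\<^sup>2 * t)) / sqrt (1 + 2 * s\<^sup>2 * t) ^ 3) \<in> borel_measurable borel"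
      by measurable
  next
    fix x :: real assume x: "0 \<le> x"
    have "0 \<le> 2 * x\<^sup>2 * t" using t by simp
    then have D: "1 + 2 * x\<^sup>2 * t > 0" by linarith
    have gx: "?g x > -1" using x D by (smt (verit) divide_nonneg_pos real_sqrt_gt_zero)
    have sq: "(?g x)\<^sup>2 = x\<^sup>2 / (1 + 2 * x\<^sup>2 * t)" using D by (simp add: power_divide)
    show "((\<lambda>s. Phi0 (?g s)) has_real_derivative exp (- (x\<^sup>2) / (1 + 2 * x\<^sup>2 * t)) / sqrt (1 + 2 * x\<^sup>2 * t) ^ 3) (at x)"
      using DERIV_chain2[OF Phi0_deriv[OF gx] g_deriv[OF t, of x]] unfolding sq by simp
    show "0 \<le> exp (- (x\<^sup>2) / (1 + 2 * x\<^sup>2 * t)) / sqrt (1 + 2 * x\<^sup>2 * t) ^ 3" using D by simp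
  next
    have "-1 < 1 / sqrt (2 * t)" using t by (smt (verit) divide_pos_pos real_sqrt_gt_zero)
    then show "((\<lambda>s. Phi0 (?g s)) \<longlongrightarrow> Phi0 (1 / sqrt (2 * t))) at_top"
      by (intro isCont_tendsto_compose[OF DERIV_isCont[OF Phi0_deriv]] g_lim t)
  qed
  then show ?thesis by simp
qed

lemma bm_meas: "brownian_motion P X x \<Longrightarrow> t \<ge> 0 \<Longrightarrow> X t \<in> borel_measurable P"
  unfolding brownian_motion_def by blast

lemma bm_init: "brownian_motion P X x \<Longrightarrow> AE \<omega> in P. X 0 \<omega> = x"
  unfolding brownian_motion_def by blast

lemma bm_dist: "brownian_motion P X x \<Longrightarrow> 0 < t \<Longrightarrow>
    distributed P lborel (\<lambda>\<omega>. X t \<omega> - X 0 \<omega>) (\<lambda>y. ennreal (normal_density 0 (sqrt t) y))"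
proof -
  assume a: "brownian_motion P X x" and t: "0 < t"
  have "\<forall>s t. 0 \<le> s \<and> s < t \<longrightarrow> distributed P lborel (\<lambda>\<omega>. X t \<omega> - X s \<omega>) (\<lambda>y. ennreal (normal_density 0 (sqrt (t - s)) y))"
    using a unfolding brownian_motion_def by blast
  then have "distributed P lborel (\<lambda>\<omega>. X t \<omega> - X 0 \<omega>) (\<lambda>y. ennreal (normal_density 0 (sqrt (t - 0)) y))"
    using t by blast
  then show ?thesis by simp
qed

lemma aux3:
  fixes r e :: real assumes "r > 0" "e \<ge> 0"
  shows "ennreal (e / r) * (ennreal (1 / r) * ennreal (1 / r)) = ennreal (e / r ^ 3)"
proof -
  have "ennreal (e / r) * (ennreal (1 / r) * ennreal (1 / r)) = ennreal (e / r * (1 / r * (1 / r)))"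
    using assms by (simp add: ennreal_mult[symmetric] del: ennreal_mult')
  also have "e / r * (1 / r * (1 / r)) = e / r ^ 3" by (simp add: power3_eq_cube)
  finally show ?thesis .
qed

lemma key:
  fixes P :: "'a measure" and B :: "nat \<Rightarrow> real \<Rightarrow> 'a \<Rightarrow> real"
  assumes PS: "prob_space P"
    and bm0: "brownian_motion P (B 0) 1" and bm1: "brownian_motion P (B 1) 0" and bm2: "brownian_motion P (B 2) 0"
    and indep: "prob_space.indep_vars P (\<lambda>_. Pi\<^sub>M {0::real..} (\<lambda>_. borel)) (\<lambda>i \<omega>. restrict (\<lambda>t. B i t \<omega>) {0..}) {0,1,2}"
    and t: "t > 0"
  shows "(\<integral>\<^sup>+\<omega>. ennreal (1 / sqrt ((B 0 t \<omega>)\<^sup>2 + (B 1 t \<omega>)\<^sup>2 + (B 2 t \<omega>)\<^sup>2)) \<partial>P) < 1"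
proof -
  interpret P: prob_space P by fact
  define xx :: "nat \<Rightarrow> real" where "xx i = (if i = 0 then 1 else 0)" for i
  have bm: "brownian_motion P (B i) (xx i)" if "i \<in> {0,1,2}" for i
    using that bm0 bm1 bm2 by (auto simp: xx_def)
  have Bm: "B i s \<in> borel_measurable P" if "i \<in> {0,1,2}" "s \<ge> 0" for i s
    using bm_meas[OF bm[OF that(1)] that(2)] .
  have [measurable]: "B 0 t \<in> borel_measurable P" "B 1 t \<in> borel_measurable P" "B 2 t \<in> borel_measurable P"
    "B (Suc 0) t \<in> borel_measurable P"
    using Bm t by auto
  have onedim: "(\<integral>\<^sup>+\<omega>. ennreal (exp (- (a * (B i t \<omega>)\<^sup>2))) \<partial>P)
      = ennreal (exp (- (a * (xx i)\<^sup>2) / (1 + 2 * a * t)) / sqrt (1 + 2 * a * t))"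
    if i: "i \<in> {0,1,2}" and a: "a \<ge> 0" for i a
  proof -
    have dist: "distributed P lborel (\<lambda>\<omega>. B i t \<omega> - B i 0 \<omega>) (\<lambda>y. ennreal (normal_density 0 (sqrt t) y))"
      by (rule bm_dist[OF bm[OF i] t])
    have ae0: "AE \<omega> in P. B i 0 \<omega> = xx i" by (rule bm_init[OF bm[OF i]])
    have "(\<integral>\<^sup>+z. ennreal (normal_density 0 (sqrt t) z) * ennreal (exp (- (a * (xx i + z)\<^sup>2))) \<partial>lborel)
        = (\<integral>\<^sup>+\<omega>. ennreal (exp (- (a * (xx i + (B i t \<omega> - B i 0 \<omega>))\<^sup>2))) \<partial>P)"
      by (rule distributed_nn_integral[OF dist]) measurable
    also have "\<dots> = (\<integral>\<^sup>+\<omega>. ennreal (exp (- (a * (B i t \<omega>)\<^sup>2))) \<partial>P)"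
    proof (rule nn_integral_cong_AE)
      show "AE \<omega> in P. ennreal (exp (- (a * (xx i + (B i t \<omega> - B i 0 \<omega>))\<^sup>2))) = ennreal (exp (- (a * (B i t \<omega>)\<^sup>2)))"
        using ae0 by eventually_elim simp
    qed
    finally show ?thesis using gauss_1d[OF t a, of "xx i"] by simp
  qed
  define S where "S \<omega> = (B 0 t \<omega>)\<^sup>2 + (B 1 t \<omega>)\<^sup>2 + (B 2 t \<omega>)\<^sup>2" for \<omega>
  have [measurable]: "S \<in> borel_measurable P" unfolding S_def[abs_def] by measurable
  have S_nonneg: "S \<omega> \<ge> 0" for \<omega> unfolding S_def by simp
  have Sexp: "(\<integral>\<^sup>+\<omega>. ennreal (exp (- (s\<^sup>2 * S \<omega>))) \<partial>P)
      = ennreal (exp (- (s\<^sup>2) / (1 + 2 * s\<^sup>2 * t)) / sqrt (1 + 2 * s\<^sup>2 * t) ^ 3)" for s :: real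
  proof -
    let ?Y = "\<lambda>(i::nat) (f::real \<Rightarrow> real). ennreal (exp (- (s\<^sup>2 * (f t)\<^sup>2)))"
    have "P.indep_vars (\<lambda>_. borel) (\<lambda>i \<omega>. ?Y i (restrict (\<lambda>t. B i t \<omega>) {0..})) {0,1,2}"
      apply (rule P.indep_vars_compose2[OF indep])
      apply measurable
      using t by auto
    moreover have "(\<lambda>i \<omega>. ?Y i (restrict (\<lambda>t. B i t \<omega>) {0..})) = (\<lambda>i \<omega>. ennreal (exp (- (s\<^sup>2 * (B i t \<omega>)\<^sup>2))))"
      using t by (auto simp: fun_eq_iff)
    ultimately have ind: "P.indep_vars (\<lambda>_. borel) (\<lambda>i \<omega>. ennreal (exp (- (s\<^sup>2 * (B i t \<omega>)\<^sup>2)))) {0,1,2}" by simp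
    have "(\<integral>\<^sup>+\<omega>. ennreal (exp (- (s\<^sup>2 * S \<omega>))) \<partial>P)
        = (\<integral>\<^sup>+\<omega>. (\<Prod>i\<in>{0,1,2::nat}. ennreal (exp (- (s\<^sup>2 * (B i t \<omega>)\<^sup>2)))) \<partial>P)"
      by (intro nn_integral_cong) (simp add: S_def exp_add[symmetric] ennreal_mult[symmetric] distrib_left)
    also have "\<dots> = (\<Prod>i\<in>{0,1,2::nat}. \<integral>\<^sup>+\<omega>. ennreal (exp (- (s\<^sup>2 * (B i t \<omega>)\<^sup>2))) \<partial>P)"
      by (rule P.indep_vars_nn_integral[OF _ ind]) auto
    also have "\<dots> = (\<Prod>i\<in>{0,1,2::nat}. ennreal (exp (- (s\<^sup>2 * (xx i)\<^sup>2) / (1 + 2 * s\<^sup>2 * t)) / sqrt (1 + 2 * s\<^sup>2 * t)))"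
      by (intro prod.cong refl onedim) auto
    also have "\<dots> = ennreal (exp (- (s\<^sup>2) / (1 + 2 * s\<^sup>2 * t)) / sqrt (1 + 2 * s\<^sup>2 * t) ^ 3)"
    proof -
      have "0 \<le> 2 * s\<^sup>2 * t" using t by simp
      then have "1 + 2 * s\<^sup>2 * t > 0" by linarith
      then have r: "sqrt (1 + 2 * s\<^sup>2 * t) > 0" by simp
      show ?thesis by (simp add: xx_def aux3[OF r])
    qed
    finally show ?thesis .
  qed
  let ?F = "\<lambda>\<omega> s. ennreal (exp (- (s\<^sup>2 * S \<omega>))) * indicator {0..} s"
  have pw: "ennreal (1 / sqrt (S \<omega>)) \<le> ennreal (2 / sqrt pi) * (\<integral>\<^sup>+s. ?F \<omega> s \<partial>lborel)" for \<omega>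
  proof (cases "S \<omega> = 0")
    case True then show ?thesis by simp
  next
    case False
    then have Sp: "S \<omega> > 0" using S_nonneg[of \<omega>] by linarith
    define r where "r = sqrt (S \<omega>)"
    have r: "r > 0" "r\<^sup>2 = S \<omega>" using Sp unfolding r_def by auto
    have "(\<integral>\<^sup>+s. ?F \<omega> s \<partial>lborel) = (\<integral>\<^sup>+s. ennreal (exp (- (s * r)\<^sup>2)) * indicator {0..} s \<partial>lborel)"
      using r by (simp add: power_mult_distrib)
    also have "\<dots> = ennreal (sqrt pi / 2 / r)" by (rule gauss_scaled[OF r(1)])
    finally have "ennreal (2 / sqrt pi) * (\<integral>\<^sup>+s. ?F \<omega> s \<partial>lborel) = ennreal (1 / r)"
      using r by (simp add: ennreal_mult'[symmetric])
    then show ?thesis unfolding r_def by simp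
  qed
  interpret PL: pair_sigma_finite P lborel
    by (intro pair_sigma_finite.intro P.sigma_finite_measure_axioms lborel.sigma_finite_measure_axioms)
  have Fm: "case_prod ?F \<in> borel_measurable (P \<Otimes>\<^sub>M lborel)" by measurable
  have fub: "(\<integral>\<^sup>+\<omega>. (\<integral>\<^sup>+s. ?F \<omega> s \<partial>lborel) \<partial>P) = (\<integral>\<^sup>+s. (\<integral>\<^sup>+\<omega>. ?F \<omega> s \<partial>P) \<partial>lborel)"
    using PL.Fubini'[OF Fm] by simp
  have inner: "(\<integral>\<^sup>+\<omega>. ?F \<omega> s \<partial>P) = ennreal (exp (- (s\<^sup>2) / (1 + 2 * s\<^sup>2 * t)) / sqrt (1 + 2 * s\<^sup>2 * t) ^ 3) * indicator {0..} s" for s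
    by (simp add: nn_integral_multc Sexp)
  define V where "V = Phi0 (1 / sqrt (2 * t)) - Phi0 0"
  have V: "V < sqrt pi / 2" unfolding V_def using t by (intro Phi0_bound) simp
  have "(\<integral>\<^sup>+\<omega>. ennreal (1 / sqrt (S \<omega>)) \<partial>P) \<le> (\<integral>\<^sup>+\<omega>. ennreal (2 / sqrt pi) * (\<integral>\<^sup>+s. ?F \<omega> s \<partial>lborel) \<partial>P)"
    by (intro nn_integral_mono pw)
  also have "\<dots> = ennreal (2 / sqrt pi) * (\<integral>\<^sup>+\<omega>. (\<integral>\<^sup>+s. ?F \<omega> s \<partial>lborel) \<partial>P)"
    by (rule nn_integral_cmult) measurable
  also have "\<dots> = ennreal (2 / sqrt pi) * ennreal V"
    unfolding fub inner V_def using h_integral[OF t] by simp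
  also have "\<dots> = ennreal (2 / sqrt pi * V)" by (simp add: ennreal_mult'[symmetric])
  also have "\<dots> < 1"
  proof -
    have "2 / sqrt pi * V < 2 / sqrt pi * (sqrt pi / 2)"
      using V by (intro mult_strict_left_mono) auto
    then have "2 / sqrt pi * V < 1" by simp
    then show ?thesis by (simp add: ennreal_less_iff)
  qed
  finally show ?thesis unfolding S_def .
qed

theorem mainTheorem12:
  fixes P :: "'a measure" and B :: "nat \<Rightarrow> real \<Rightarrow> 'a \<Rightarrow> real"
    and M W Y :: "real \<Rightarrow> 'a \<Rightarrow> real"
    and G F :: "real \<Rightarrow> 'a measure" and \<epsilon> :: real
  assumes "prob_space P"
    and "brownian_motion P (B 0) 1" and "brownian_motion P (B 1) 0" and "brownian_motion P (B 2) 0"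
    and "prob_space.indep_vars P (\<lambda>_. Pi\<^sub>M {0::real..} (\<lambda>_. borel)) (\<lambda>i \<omega>. restrict (\<lambda>t. B i t \<omega>) {0..}) {0,1,2}"
    and M_def: "\<And>t \<omega>. M t \<omega> = 1 / sqrt ((B 0 t \<omega>)\<^sup>2 + (B 1 t \<omega>)\<^sup>2 + (B 2 t \<omega>)\<^sup>2)"
    and W_def: "\<And>t \<omega>. W t \<omega> = sqrt ((B 0 t \<omega>)\<^sup>2 + (B 1 t \<omega>)\<^sup>2 + (B 2 t \<omega>)\<^sup>2)
                          - sqrt ((B 0 0 \<omega>)\<^sup>2 + (B 1 0 \<omega>)\<^sup>2 + (B 2 0 \<omega>)\<^sup>2) - (LBINT s:{0..t}. M s \<omega>)"
    and G_def: "G = aug_nat_filtration P W"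
    and "\<epsilon> > 0"
    and F_def: "\<And>t. F t = G (t - \<epsilon>)"
    and "optional_projection P F M Y"
  shows "\<not> (\<exists>Q. equiv_prob_on Q P (filtration_infty P G) \<and> is_local_martingale Q F Y)"
proof
  assume "\<exists>Q. equiv_prob_on Q P (filtration_infty P G) \<and> is_local_martingale Q F Y"
  then obtain Q where eqv: "equiv_prob_on Q P (filtration_infty P G)"
    and lm: "is_local_martingale Q F Y" by blast
  interpret P: prob_space P by fact
  have W0: "\<And>\<omega>. W 0 \<omega> = 0"
  proof -
    fix \<omega>
    have "(LBINT s:{0..0::real}. M s \<omega>) = 0" unfolding set_lebesgue_integral_def
      by (rule integral_eq_zero_AE) (use AE_lborel_singleton[of 0] in \<open>auto elim!: eventually_mono\<close>)
    then show "W 0 \<omega> = 0" by (simp add: W_def)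
  qed
  define T where "T = {A \<in> sets P. A \<in> null_sets P \<or> space P - A \<in> null_sets P}"
  note TS = triv_sets[of W P, OF W0, folded T_def G_def]
  have FG: "F t = G 0" if "t \<le> \<epsilon>" for t
    using that unfolding F_def G_def aug_nat_filtration_def by (simp add: max_def)
  have QP: "prob_space Q" "space Q = space P" "sets Q = sets (filtration_infty P G)"
    and eqv0: "\<And>A. A \<in> sets (filtration_infty P G) \<Longrightarrow> emeasure Q A = 0 \<longleftrightarrow> emeasure P A = 0"
    using eqv unfolding equiv_prob_on_def by auto
  interpret Q: prob_space Q by fact
  have powG: "(\<Union>t. sets (G t)) \<subseteq> Pow (space P)"
  proof -
    have "sets (G t) \<subseteq> Pow (space P)" for t
      using sets.sets_into_space[of _ "G t"] unfolding G_def aug_nat_filtration_def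
      by (auto simp: space_measure_of_conv)
    then show ?thesis by auto
  qed
  have G0H: "sets (G 0) \<subseteq> sets Q"
    unfolding QP filtration_infty_def using powG by (auto simp: sets_measure_of)
  have nullPQ: "N \<in> null_sets Q" if "N \<in> null_sets P" for N
  proof -
    have "N \<in> sets Q" using that TS(2) G0H by auto
    then show ?thesis using that eqv0 QP(3) by (auto simp: null_sets_def)
  qed
  have AEPQ: "AE x in Q. R x" if "AE x in P. R x" for R
  proof -
    from that obtain N where N: "{x \<in> space P. \<not> R x} \<subseteq> N" "N \<in> null_sets P"
      by (auto elim!: AE_E simp: null_sets_def)
    show ?thesis by (rule AE_I[of _ _ N]) (use N nullPQ QP(2) in auto)
  qed
  have G0P: "sets (G 0) \<subseteq> sets P" using TS(1) unfolding T_def by blast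
  have subQ: "subalgebra Q (F t)" if "t \<le> \<epsilon>" for t
    by (simp add: subalgebra_def FG[OF that] TS(3) QP(2) G0H)
  have subP: "subalgebra P (F t)" if "t \<le> \<epsilon>" for t
    by (simp add: subalgebra_def FG[OF that] TS(3) G0P)
  have trivF: "A \<in> null_sets P \<or> space P - A \<in> null_sets P" if "t \<le> \<epsilon>" "A \<in> sets (F t)" for t A
  proof -
    have "A \<in> T" using TS(1) that(2) unfolding FG[OF that(1)] by blast
    then show ?thesis unfolding T_def by blast
  qed
  from lm[unfolded is_local_martingale_def] obtain \<tau> :: "nat \<Rightarrow> 'a \<Rightarrow> real" where
    H1: "\<forall>n. stopping_time F (\<tau> n) \<and> (\<forall>\<omega>\<in>space Q. 0 \<le> \<tau> n \<omega>)"
    and H2: "AE \<omega> in Q. mono (\<lambda>n. \<tau> n \<omega>) \<and> filterlim (\<lambda>n. \<tau> n \<omega>) at_top sequentially"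
    and H3: "\<forall>n. is_martingale Q F (\<lambda>t \<omega>. Y (min t (\<tau> n \<omega>)) \<omega>)"
    by blast
  have st: "\<And>n. stopping_time F (\<tau> n)" and tpos: "\<And>n \<omega>. \<omega> \<in> space Q \<Longrightarrow> 0 \<le> \<tau> n \<omega>"
    and mart: "\<And>n. is_martingale Q F (\<lambda>t \<omega>. Y (min t (\<tau> n \<omega>)) \<omega>)"
    using H1 H3 by auto
  have tlim: "AE \<omega> in Q. filterlim (\<lambda>n. \<tau> n \<omega>) at_top sequentially"
    using H2 by (auto elim!: eventually_mono)
  have spF: "space (F \<epsilon>) = space P" using FG[of \<epsilon>] TS(3) by simp
  have aeb: "(AE \<omega> in Q. \<epsilon> < \<tau> n \<omega>) \<or> (AE \<omega> in Q. \<tau> n \<omega> \<le> \<epsilon>)" for n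
  proof -
    have E: "{x \<in> space (F \<epsilon>). \<tau> n x \<le> \<epsilon>} \<in> sets (F \<epsilon>)"
      using st[of n] unfolding stopping_time_def pred_def by blast
    then have E': "{x \<in> space P. \<tau> n x \<le> \<epsilon>} \<in> sets (F \<epsilon>)" by (simp only: spF)
    from trivF[OF order_refl E']
    show ?thesis
    proof
      assume "{x \<in> space P. \<tau> n x \<le> \<epsilon>} \<in> null_sets P"
      then have "AE x in Q. x \<notin> {x \<in> space P. \<tau> n x \<le> \<epsilon>}" by (intro AE_not_in nullPQ)
      then have "AE x in Q. \<epsilon> < \<tau> n x"
        by (rule AE_mp) (rule AE_I2, simp add: QP(2) not_le)
      then show ?thesis ..
    next
      assume "space P - {x \<in> space P. \<tau> n x \<le> \<epsilon>} \<in> null_sets P"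
      then have "AE x in Q. x \<notin> space P - {x \<in> space P. \<tau> n x \<le> \<epsilon>}" by (intro AE_not_in nullPQ)
      then have "AE x in Q. \<tau> n x \<le> \<epsilon>"
        by (rule AE_mp) (rule AE_I2, simp add: QP(2))
      then show ?thesis ..
    qed
  qed
  have "\<exists>n. AE \<omega> in Q. \<epsilon> < \<tau> n \<omega>"
  proof (rule ccontr)
    assume "\<nexists>n. AE \<omega> in Q. \<epsilon> < \<tau> n \<omega>"
    then have "AE \<omega> in Q. \<tau> n \<omega> \<le> \<epsilon>" for n using aeb[of n] by blast
    then have "AE \<omega> in Q. \<forall>n. \<tau> n \<omega> \<le> \<epsilon>" by (simp add: AE_all_countable)
    with tlim have "AE \<omega> in Q. False"
    proof eventually_elim
      case (elim \<omega>)
      then have "eventually (\<lambda>n. \<epsilon> + 1 \<le> \<tau> n \<omega>) sequentially"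
        by (simp add: filterlim_at_top)
      then obtain k where "\<epsilon> + 1 \<le> \<tau> k \<omega>" by (auto simp: eventually_sequentially)
      moreover have "\<tau> k \<omega> \<le> \<epsilon>" using elim by blast
      ultimately show False by linarith
    qed
    then show False by simp
  qed
  then obtain n where nbig: "AE \<omega> in Q. \<epsilon> < \<tau> n \<omega>" by blast
  have OP: "\<And>t. t \<ge> 0 \<Longrightarrow> Y t \<in> borel_measurable (F t)"
    "\<And>t. t \<ge> 0 \<Longrightarrow> AE \<omega> in P. Y t \<omega> = real_cond_exp P (F t) (M t) \<omega>"
    using \<open>optional_projection P F M Y\<close> unfolding optional_projection_def by auto
  have Bm: "\<And>i t. i \<in> {0,1,2::nat} \<Longrightarrow> t \<ge> 0 \<Longrightarrow> B i t \<in> borel_measurable P"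
    using assms(2-4) unfolding brownian_motion_def by auto
  have B0: "AE \<omega> in P. B 0 0 \<omega> = 1" "AE \<omega> in P. B 1 0 \<omega> = 0" "AE \<omega> in P. B 2 0 \<omega> = 0"
    using assms(2-4) unfolding brownian_motion_def by auto
  have Mm: "M t \<in> borel_measurable P" if "t \<ge> 0" for t
  proof -
    have [measurable]: "B 0 t \<in> borel_measurable P" "B 1 t \<in> borel_measurable P" "B 2 t \<in> borel_measurable P"
      using Bm that by auto
    have "M t = (\<lambda>\<omega>. 1 / sqrt ((B 0 t \<omega>)\<^sup>2 + (B 1 t \<omega>)\<^sup>2 + (B 2 t \<omega>)\<^sup>2))" by (rule ext) (simp add: M_def)
    then show ?thesis by (simp only:) measurable
  qed
  have M0: "AE \<omega> in P. M 0 \<omega> = 1" using B0 by eventually_elim (simp add: M_def)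
  have intM0: "integrable P (M 0)"
    using integrable_cong_AE[OF Mm[of 0] _ M0] by simp
  have EM0: "integral\<^sup>L P (M 0) = 1"
    using integral_cong_AE[OF Mm[of 0] _ M0] by (simp add: P.prob_space)
  have keyM: "(\<integral>\<^sup>+\<omega>. ennreal (M \<epsilon> \<omega>) \<partial>P) < 1"
    using key[OF assms(1-5) \<open>\<epsilon> > 0\<close>] by (simp add: M_def)
  have Mnn: "0 \<le> M t \<omega>" for t \<omega> by (simp add: M_def)
  have intMe: "integrable P (M \<epsilon>)"
    by (rule integrableI_nonneg) (use Mm[of \<epsilon>] \<open>\<epsilon> > 0\<close> Mnn keyM in \<open>auto simp: less_top[symmetric] intro: order.strict_trans\<close>)
  define c where "c = integral\<^sup>L P (M \<epsilon>)"
  have "ennreal c < 1"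
    using keyM nn_integral_eq_integral[OF intMe] Mnn unfolding c_def by simp
  then have c1: "c < 1" by (simp add: ennreal_less_iff)
  have e0: "(0::real) \<le> \<epsilon>" "\<epsilon> \<le> \<epsilon>" using \<open>\<epsilon> > 0\<close> by auto
  have ce0: "AE \<omega> in P. real_cond_exp P (F 0) (M 0) \<omega> = 1"
    using triv_cond_exp[OF assms(1) subP[OF e0(1)] trivF[OF e0(1)] intM0] unfolding EM0 .
  have cee: "AE \<omega> in P. real_cond_exp P (F \<epsilon>) (M \<epsilon>) \<omega> = c"
    using triv_cond_exp[OF assms(1) subP[OF e0(2)] trivF[OF e0(2)] intMe] unfolding c_def .
  have Y0: "AE \<omega> in P. Y 0 \<omega> = 1"
    using OP(2)[OF order_refl] ce0 by eventually_elim simp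
  have Ye: "AE \<omega> in P. Y \<epsilon> \<omega> = c"
    using OP(2)[OF less_imp_le[OF \<open>\<epsilon> > 0\<close>]] cee by eventually_elim simp
  let ?X = "\<lambda>t \<omega>. Y (min t (\<tau> n \<omega>)) \<omega>"
  have Xm: "?X t \<in> borel_measurable (F t)" if "t \<ge> 0" for t
    using mart[of n] that unfolding is_martingale_def by auto
  have spaceF0: "space P \<in> sets (F 0)" using FG[of 0] \<open>\<epsilon> > 0\<close> by (metis TS(3) less_imp_le sets.top)
  have meq: "(\<integral>\<omega>. indicator (space P) \<omega> * ?X \<epsilon> \<omega> \<partial>Q) = (\<integral>\<omega>. indicator (space P) \<omega> * ?X 0 \<omega> \<partial>Q)"
    using mart[of n] spaceF0 \<open>\<epsilon> > 0\<close> unfolding is_martingale_def by auto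
  have spQ: "space P \<in> sets Q" using QP(2) by (metis sets.top)
  have XmQ: "?X t \<in> borel_measurable Q" if "0 \<le> t" "t \<le> \<epsilon>" for t
    using measurable_from_subalg[OF subQ Xm] that by auto
  have "(\<integral>\<omega>. indicator (space P) \<omega> * ?X \<epsilon> \<omega> \<partial>Q) = (\<integral>\<omega>. c \<partial>Q)"
  proof (rule integral_cong_AE)
    show "(\<lambda>\<omega>. indicator (space P) \<omega> * ?X \<epsilon> \<omega>) \<in> borel_measurable Q"
      using XmQ[OF e0] spQ by measurable
    show "AE x in Q. indicator (space P) x * ?X \<epsilon> x = c"
    proof -
      have "AE x in Q. x \<in> space Q" by simp
      with AEPQ[OF Ye] nbig show ?thesis
      proof eventually_elim
        case (elim x)
        then show ?case using QP(2) by (simp add: min_def)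
      qed
    qed
  qed simp
  moreover have "(\<integral>\<omega>. indicator (space P) \<omega> * ?X 0 \<omega> \<partial>Q) = (\<integral>\<omega>. 1 \<partial>Q)"
  proof (rule integral_cong_AE)
    show "(\<lambda>\<omega>. indicator (space P) \<omega> * ?X 0 \<omega>) \<in> borel_measurable Q"
      using XmQ[OF order_refl e0(1)] spQ by measurable
    have "AE x in Q. x \<in> space Q" by simp
    with AEPQ[OF Y0] show "AE x in Q. indicator (space P) x * ?X 0 x = 1"
    proof eventually_elim
      case (elim x)
      then show ?case using QP(2) tpos[of x n] by (simp add: min_def)
    qed
  qed simp
  ultimately have "c = 1" using meq Q.prob_space by simp
  with c1 show False by simp
qed

end
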